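(* Let $3\leq l\leq t$ be integers. If $s$ is sufficiently large (in terms of $l$ and $t$) and $n\geq s+(t-1)\binom{s}{l}+1$, then $$ex(n,\{K_{l,t},M_{s+1}\})=(l-1)n+(t-1)\binom{s}{l}-\left\lceil\frac{s(l-1)}{2}\right\rceil.$$
   Context: All graphs are finite and simple. $ex(n,\mathscr{F})$ is the maximum number of edges of an $n$-vertex graph containing no member of the family $\mathscr{F}$ as a subgraph. $K_{l,t}$ is the complete bipartite graph with parts of sizes $l$ and $t$, and $M_{s+1}$ is the matching of $s+1$ pairwise disjoint edges. (The quantity $s+(t-1)\binom{s}{l}+1$ is denoted $n(s)$ in the paper.) *)

theory Defs
  imports Complex_Main
begin

text \<open>A finite simple graph on vertex set V is given by its edge set E, a set of
  2-element subsets of V. Graphs on n vertices are taken with V = {0..<n}.\<close>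

definition simple_graph :: "nat set \<Rightarrow> nat set set \<Rightarrow> bool" where
  "simple_graph V E \<longleftrightarrow> (\<forall>e\<in>E. e \<subseteq> V \<and> card e = 2)"

definition contains_Kbip :: "nat set \<Rightarrow> nat set set \<Rightarrow> nat \<Rightarrow> nat \<Rightarrow> bool" where
  "contains_Kbip V E l t \<longleftrightarrow> (\<exists>A B. A \<subseteq> V \<and> B \<subseteq> V \<and> A \<inter> B = {} \<and>
      card A = l \<and> card B = t \<and> (\<forall>a\<in>A. \<forall>b\<in>B. {a, b} \<in> E))"

definition contains_matching :: "nat set set \<Rightarrow> nat \<Rightarrow> bool" where
  "contains_matching E k \<longleftrightarrow> (\<exists>M. M \<subseteq> E \<and> finite M \<and> card M = k \<and>
      (\<forall>e\<in>M. \<forall>f\<in>M. e \<noteq> f \<longrightarrow> e \<inter> f = {}))"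

definition ex_Kbip_matching :: "nat \<Rightarrow> nat \<Rightarrow> nat \<Rightarrow> nat \<Rightarrow> nat" where
  "ex_Kbip_matching n l t s = Max {card E | E. simple_graph {0..<n} E \<and>
      \<not> contains_Kbip {0..<n} E l t \<and> \<not> contains_matching E (s + 1)}"

end

theory Submission
  imports Defs
begin

lemma binom_top_mono: "m \<le> s \<Longrightarrow> m choose k \<le> s choose k"
proof (induction s rule: dec_induct)
  case base then show ?case by simp
next
  case (step n)
  have "n choose k \<le> Suc n choose k"
    by (cases k) auto
  then show ?case using step by linarith
qed

lemma binom_growth:
  assumes "m \<le> s" "1 \<le> l"
  shows "(m choose l) + (s - m) * (m choose (l - 1)) \<le> (s choose l)"
  using assms(1)
proof (induction s rule: dec_induct)
  case base then show ?case by simp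
next
  case (step n)
  obtain l' where l': "l = Suc l'" using assms(2) by (cases l) auto
  have "(Suc n choose l) = (n choose l) + (n choose l')" using l' by simp
  moreover have "(m choose l') \<le> (n choose l')" using binom_top_mono step by simp
  moreover have "Suc n - m = Suc (n - m)" using step by simp
  ultimately show ?case using step l' by simp
qed

lemma binom_shift2: "j choose 2 \<le> (j + i) choose (2 + i)"
proof (induction i)
  case 0 then show ?case by simp
next
  case (Suc i)
  have "((j + Suc i) choose (2 + Suc i)) = ((j + i) choose (2 + i)) + ((j + i) choose (Suc (2 + i)))"
    by simp
  then show ?case using Suc by simp
qed

lemma binom_big:
  assumes l: "3 \<le> l" and s: "500 * (l + 1) \<le> s" and j: "s \<le> 2 * j"
  shows "3 * (4 * s + 4 + l * s) \<le> j choose (l - 1)"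
proof -
  define x where "x = j - (l - 3)"
  have jx: "j = x + (l - 3)" "l - 1 = 2 + (l - 3)" using x_def l s j by auto
  have c2: "x choose 2 \<le> j choose (l - 1)" using binom_shift2[of x "l - 3"] jx by simp
  have x4: "s \<le> 4 * (x - 1)" using x_def s j by auto
  have x4': "s \<le> 4 * x" using x4 by simp
  have "s * s \<le> (4 * x) * (4 * (x - 1))" using x4 x4' mult_le_mono by blast
  then have sq: "s * s \<le> 16 * (x * (x - 1))" by (simp add: algebra_simps)
  have e2: "2 * (x choose 2) = x * (x - 1)"
    by (cases x) (auto simp: choose_two)
  have "s * (500 * (l + 1)) \<le> s * s" using s by simp
  then have "s * (500 * (l + 1)) \<le> 32 * (x choose 2)" using sq e2 by linarith
  moreover have "96 * (4 * s + 4 + l * s) \<le> s * (500 * (l + 1))" using s by (simp add: algebra_simps)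
  ultimately have "96 * (4 * s + 4 + l * s) \<le> 32 * (x choose 2)" by linarith
  then show ?thesis using c2 by linarith
qed

lemma binom_gap:
  assumes l: "3 \<le> l" and s: "500 * (l + 1) \<le> s" and m: "m < s"
  shows "(m choose l) + (s - m) * (4 * s + 4 + l * s) \<le> (s choose l)"
proof (cases "s \<le> 2 * m")
  case True
  have "(s - m) * (4 * s + 4 + l * s) \<le> (s - m) * (m choose (l - 1))"
    using binom_big[OF l s True] by simp
  then show ?thesis using binom_growth[of m s l] m l by linarith
next
  case False
  define m' where "m' = (s + 1) div 2"
  have m': "m \<le> m'" "m' \<le> s" "s \<le> 2 * m'" "s \<le> 3 * (s - m')" using False m'_def s by auto
  have "m choose l \<le> m' choose l" using binom_top_mono m' by simp
  moreover have "(s - m') * (3 * (4 * s + 4 + l * s)) \<le> (s - m') * (m' choose (l - 1))"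
    using binom_big[OF l s m'(3)] by simp
  moreover have "(s - m) * (4 * s + 4 + l * s) \<le> (s - m') * (3 * (4 * s + 4 + l * s))"
  proof -
    have "(s - m) * (4 * s + 4 + l * s) \<le> s * (4 * s + 4 + l * s)" by simp
    also have "\<dots> \<le> (3 * (s - m')) * (4 * s + 4 + l * s)" using m'(4) mult_le_mono1 by blast
    finally show ?thesis by (simp add: algebra_simps)
  qed
  ultimately show ?thesis using binom_growth[of m' s l] m' l by linarith
qed

definition nbr :: "nat set set \<Rightarrow> nat \<Rightarrow> nat set" where
  "nbr E v = {u. {u, v} \<in> E}"

definition is_match :: "nat set set \<Rightarrow> nat set set \<Rightarrow> bool" where
  "is_match E M \<longleftrightarrow> M \<subseteq> E \<and> finite M \<and> (\<forall>e\<in>M. \<forall>f\<in>M. e \<noteq> f \<longrightarrow> e \<inter> f = {})"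

lemma contains_matching_iff: "contains_matching E k \<longleftrightarrow> (\<exists>M. is_match E M \<and> card M = k)"
  unfolding contains_matching_def is_match_def by blast

lemma match_ge:
  assumes "is_match E M" "k \<le> card M"
  shows "contains_matching E k"
proof -
  obtain M' where "M' \<subseteq> M" "card M' = k"
    using obtain_subset_with_card_n[OF assms(2)] by blast
  moreover have "finite M'" using assms(1) \<open>M' \<subseteq> M\<close> unfolding is_match_def using finite_subset by blast
  ultimately show ?thesis using assms(1) unfolding contains_matching_def is_match_def
    by (intro exI[of _ M']) blast
qed

lemma card_Union_match:
  assumes "is_match E M" "\<forall>e\<in>E. card e = 2"
  shows "card (\<Union>M) \<le> 2 * card M"
proof -
  have "card (\<Union>M) \<le> sum card M" by (rule card_Union_le_sum_card)
  also have "\<dots> = sum (\<lambda>_. 2) M" using assms unfolding is_match_def by (intro sum.cong) auto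
  finally show ?thesis by simp
qed

locale sgraph =
  fixes V :: "nat set" and E :: "nat set set"
  assumes finV: "finite V" and sg: "simple_graph V E"
begin

lemma finE: "finite E"
proof -
  have "E \<subseteq> Pow V" using sg unfolding simple_graph_def by auto
  moreover have "finite (Pow V)" using finV by simp
  ultimately show ?thesis using finite_subset by blast
qed

lemma edge_card: "e \<in> E \<Longrightarrow> card e = 2"
  using sg unfolding simple_graph_def by auto

lemma edge_sub: "e \<in> E \<Longrightarrow> e \<subseteq> V"
  using sg unfolding simple_graph_def by auto

lemma edgeE:
  assumes "e \<in> E"
  obtains a b where "a \<noteq> b" "a \<in> V" "b \<in> V" "e = {a, b}"
  using edge_card[OF assms] edge_sub[OF assms] by (auto simp: card_2_iff)

lemma nbr_sub: "nbr E v \<subseteq> V"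
  unfolding nbr_def using edge_sub by auto

lemma fin_nbr: "finite (nbr E v)"
  using nbr_sub finV finite_subset by blast

lemma no_loop: "v \<notin> nbr E v"
  unfolding nbr_def using edge_card[of "{v}"] by auto

lemma deg_inc: "card {e \<in> E. v \<in> e} = card (nbr E v)"
proof -
  have inj: "inj_on (\<lambda>u. {u, v}) (nbr E v)"
    unfolding inj_on_def doubleton_eq_iff by blast
  have img: "(\<lambda>u. {u, v}) ` (nbr E v) = {e \<in> E. v \<in> e}"
  proof
    show "(\<lambda>u. {u, v}) ` nbr E v \<subseteq> {e \<in> E. v \<in> e}" unfolding nbr_def by auto
    show "{e \<in> E. v \<in> e} \<subseteq> (\<lambda>u. {u, v}) ` nbr E v"
    proof
      fix y assume y: "y \<in> {e \<in> E. v \<in> e}"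
      then obtain a b where ab: "a \<noteq> b" "y = {a, b}" using edgeE by blast
      have "v = a \<or> v = b" using y ab by auto
      then show "y \<in> (\<lambda>u. {u, v}) ` nbr E v"
      proof
        assume "v = a"
        then have "y = {b, v}" "b \<in> nbr E v" using y ab unfolding nbr_def by (auto simp: insert_commute)
        then show ?thesis by blast
      next
        assume "v = b"
        then have "y = {a, v}" "a \<in> nbr E v" using y ab unfolding nbr_def by auto
        then show ?thesis by blast
      qed
    qed
  qed
  show ?thesis using card_image[OF inj] img by simp
qed

end

context sgraph begin

lemma greedy:
  assumes "finite S'"
  shows "(\<forall>x\<in>S'. D \<le> card (nbr E x)) \<Longrightarrow> is_match E M \<Longrightarrow> \<Union>M \<inter> S' = {} \<Longrightarrow>
    2 * card M + 2 * card S' \<le> D \<Longrightarrow> \<exists>M'. is_match E M' \<and> card M' = card M + card S'"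
  using assms
proof (induction S' arbitrary: M rule: finite_induct)
  case empty
  then show ?case by auto
next
  case (insert x F)
  have cU: "card (\<Union>M) \<le> 2 * card M" using card_Union_match[OF insert.prems(2)] edge_card by blast
  have fU: "finite (\<Union>M)"
  proof -
    have "finite M" using insert.prems(2) unfolding is_match_def by blast
    moreover have "\<forall>e\<in>M. finite e" using insert.prems(2) edge_card unfolding is_match_def
      by (metis card.infinite subsetD zero_neq_numeral)
    ultimately show ?thesis by blast
  qed
  have "card (\<Union>M \<union> F) \<le> 2 * card M + card F"
    using card_Un_le[of "\<Union>M" F] cU by linarith
  also have "\<dots> < D" using insert.prems(4) insert.hyps by simp
  also have "\<dots> \<le> card (nbr E x)" using insert.prems(1) by simp
  finally have "card (\<Union>M \<union> F) < card (nbr E x)" .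
  then have "\<not> nbr E x \<subseteq> \<Union>M \<union> F"
    using card_mono[OF finite_UnI[OF fU insert.hyps(1)]] by (meson not_le)
  then obtain y where y: "y \<in> nbr E x" "y \<notin> \<Union>M" "y \<notin> F" by blast
  have yx: "{y, x} \<in> E" using y(1) unfolding nbr_def by simp
  have xM: "x \<notin> \<Union>M" using insert.prems(3) by blast
  define M2 where "M2 = insert {y, x} M"
  have nin: "{y, x} \<notin> M" using xM by blast
  have finM: "finite M" using insert.prems(2) unfolding is_match_def by blast
  have m2: "is_match E M2"
    using insert.prems(2) yx y(2) xM unfolding is_match_def M2_def by blast
  have c2: "card M2 = card M + 1" using nin finM unfolding M2_def by simp
  have d2: "\<Union>M2 \<inter> F = {}" using insert.prems(3) y(3) insert.hyps(2) unfolding M2_def by blast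
  have e2: "2 * card M2 + 2 * card F \<le> D" using insert.prems(4) insert.hyps c2 by simp
  obtain M' where "is_match E M'" "card M' = card M2 + card F"
    using insert.IH[OF _ m2 d2 e2] insert.prems(1) by blast
  then show ?case using c2 insert.hyps by auto
qed

lemma cover_bound:
  assumes HE: "H \<subseteq> E" and nu: "\<forall>M. is_match H M \<longrightarrow> card M \<le> k"
    and deg: "\<forall>v. card {e \<in> H. v \<in> e} \<le> \<Delta>"
  shows "card H \<le> 2 * k * \<Delta>"
proof -
  define Ms where "Ms = {M. is_match H M}"
  have finH: "finite H" using HE finE finite_subset by blast
  have "Ms \<subseteq> Pow H" unfolding Ms_def is_match_def by blast
  moreover have "finite (Pow H)" using finH by simp
  ultimately have finMs: "finite Ms" using finite_subset by blast
  have "{} \<in> Ms" unfolding Ms_def is_match_def by simp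
  then have "Max (card ` Ms) \<in> card ` Ms" using finMs by (intro Max_in) auto
  then obtain M0 where M0: "M0 \<in> Ms" "card M0 = Max (card ` Ms)" by auto
  have maxM: "card M \<le> card M0" if "M \<in> Ms" for M using M0(2) finMs that by simp
  have m0: "is_match H M0" using M0 Ms_def by simp
  have finM0: "finite M0" using m0 unfolding is_match_def by blast
  have m0E: "is_match E M0" using m0 HE unfolding is_match_def by blast
  have cover: "\<exists>v\<in>\<Union>M0. v \<in> e" if e: "e \<in> H" for e
  proof (rule ccontr)
    assume "\<not> ?thesis"
    then have dis: "e \<inter> \<Union>M0 = {}" by blast
    have "card e = 2" using e HE edge_card by blast
    then have "e \<noteq> {}" by auto
    then have nin: "e \<notin> M0" using dis by blast
    have "is_match H (insert e M0)" using m0 e dis unfolding is_match_def by blast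
    then have "card (insert e M0) \<le> card M0" using maxM Ms_def by blast
    then show False using nin finM0 by simp
  qed
  have "H \<subseteq> (\<Union>v\<in>\<Union>M0. {e \<in> H. v \<in> e})" using cover by blast
  moreover have fU: "finite (\<Union>M0)"
  proof -
    have "\<forall>e\<in>M0. finite e" using m0E edge_card unfolding is_match_def
      by (metis card.infinite subsetD zero_neq_numeral)
    then show ?thesis using finM0 by blast
  qed
  ultimately have "card H \<le> card (\<Union>v\<in>\<Union>M0. {e \<in> H. v \<in> e})"
    by (intro card_mono) (auto intro: finite_subset[OF _ finH])
  also have "\<dots> \<le> (\<Sum>v\<in>\<Union>M0. card {e \<in> H. v \<in> e})" by (rule card_UN_le[OF fU])
  also have "\<dots> \<le> (\<Sum>v\<in>\<Union>M0. \<Delta>)" using deg by (intro sum_mono) auto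
  also have "\<dots> = card (\<Union>M0) * \<Delta>" by simp
  also have "\<dots> \<le> (2 * card M0) * \<Delta>" using card_Union_match[OF m0E] edge_card by (simp add: mult_le_mono1)
  also have "\<dots> \<le> 2 * k * \<Delta>" using nu m0 by (simp add: mult_le_mono1)
  finally show ?thesis .
qed

end

context sgraph begin

lemma ind_sum:
  assumes S: "finite S" and T: "finite T"
  shows "(\<Sum>v\<in>T. card (nbr E v \<inter> S)) =
         (\<Sum>e\<in>E. \<Sum>v\<in>T. \<Sum>u\<in>S. (of_bool (e = {u, v}) :: nat))"
proof -
  have 1: "card (nbr E v \<inter> S) = (\<Sum>u\<in>S. (of_bool ({u, v} \<in> E) :: nat))" for v
  proof -
    have "nbr E v \<inter> S = S \<inter> {u. {u, v} \<in> E}" unfolding nbr_def by blast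
    then show ?thesis using S by simp
  qed
  have 2: "(of_bool ({u, v} \<in> E) :: nat) = (\<Sum>e\<in>E. of_bool (e = {u, v}))" for u v
  proof -
    have "E \<inter> {e. e = {u, v}} = (if {u, v} \<in> E then {{u, v}} else {})" by auto
    then show ?thesis using finE by simp
  qed
  have "(\<Sum>v\<in>T. card (nbr E v \<inter> S)) = (\<Sum>v\<in>T. \<Sum>u\<in>S. \<Sum>e\<in>E. (of_bool (e = {u, v}) :: nat))"
    using 1 2 by simp
  also have "\<dots> = (\<Sum>v\<in>T. \<Sum>e\<in>E. \<Sum>u\<in>S. (of_bool (e = {u, v}) :: nat))"
    by (intro sum.cong refl) (rule sum.swap)
  also have "\<dots> = (\<Sum>e\<in>E. \<Sum>v\<in>T. \<Sum>u\<in>S. (of_bool (e = {u, v}) :: nat))"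
    by (rule sum.swap)
  finally show ?thesis .
qed

lemma pair_sum:
  assumes ab: "a \<noteq> b" and S: "finite S" and T: "finite T"
  shows "(\<Sum>v\<in>T. \<Sum>u\<in>S. (of_bool ({a, b} = {u, v}) :: nat)) =
         of_bool (a \<in> S \<and> b \<in> T) + of_bool (b \<in> S \<and> a \<in> T)"
proof -
  have e: "(of_bool ({a, b} = {u, v}) :: nat) = of_bool (u = a \<and> v = b) + of_bool (u = b \<and> v = a)" for u v
    using ab by (auto simp: doubleton_eq_iff)
  have s1: "(\<Sum>u\<in>S. (of_bool (u = x \<and> v = y) :: nat)) = of_bool (x \<in> S \<and> v = y)" for x y v
  proof -
    have "S \<inter> {u. u = x \<and> v = y} = (if x \<in> S \<and> v = y then {x} else {})" by auto
    then show ?thesis using S by simp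
  qed
  have s2: "(\<Sum>v\<in>T. (of_bool (x \<in> S \<and> v = y) :: nat)) = of_bool (x \<in> S \<and> y \<in> T)" for x y
  proof -
    have "T \<inter> {v. x \<in> S \<and> v = y} = (if x \<in> S \<and> y \<in> T then {y} else {})" by auto
    then show ?thesis using T by simp
  qed
  show ?thesis by (simp add: e sum.distrib s1 s2)
qed

lemma sum_deg_all:
  assumes S: "S \<subseteq> V"
  shows "(\<Sum>v\<in>V. card (nbr E v \<inter> S)) = (\<Sum>e\<in>E. card (e \<inter> S))"
proof -
  have fS: "finite S" using S finV finite_subset by blast
  have "(\<Sum>v\<in>V. card (nbr E v \<inter> S)) = (\<Sum>e\<in>E. \<Sum>v\<in>V. \<Sum>u\<in>S. (of_bool (e = {u, v}) :: nat))"
    by (rule ind_sum[OF fS finV])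
  also have "\<dots> = (\<Sum>e\<in>E. card (e \<inter> S))"
  proof (rule sum.cong[OF refl])
    fix e assume e: "e \<in> E"
    obtain a b where ab: "a \<noteq> b" "a \<in> V" "b \<in> V" "e = {a, b}" using edgeE[OF e] by blast
    have "card ({a, b} \<inter> S) = of_bool (a \<in> S) + of_bool (b \<in> S)"
      using ab(1) by (cases "a \<in> S"; cases "b \<in> S") auto
    then show "(\<Sum>v\<in>V. \<Sum>u\<in>S. (of_bool (e = {u, v}) :: nat)) = card (e \<inter> S)"
      using pair_sum[OF ab(1) fS finV] ab by simp
  qed
  finally show ?thesis .
qed

lemma sum_deg_in:
  assumes S: "S \<subseteq> V"
  shows "(\<Sum>v\<in>S. card (nbr E v \<inter> S)) = (\<Sum>e\<in>E. 2 * (of_bool (e \<subseteq> S) :: nat))"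
proof -
  have fS: "finite S" using S finV finite_subset by blast
  have "(\<Sum>v\<in>S. card (nbr E v \<inter> S)) = (\<Sum>e\<in>E. \<Sum>v\<in>S. \<Sum>u\<in>S. (of_bool (e = {u, v}) :: nat))"
    by (rule ind_sum[OF fS fS])
  also have "\<dots> = (\<Sum>e\<in>E. 2 * (of_bool (e \<subseteq> S) :: nat))"
  proof (rule sum.cong[OF refl])
    fix e assume e: "e \<in> E"
    obtain a b where ab: "a \<noteq> b" "a \<in> V" "b \<in> V" "e = {a, b}" using edgeE[OF e] by blast
    show "(\<Sum>v\<in>S. \<Sum>u\<in>S. (of_bool (e = {u, v}) :: nat)) = 2 * of_bool (e \<subseteq> S)"
      using pair_sum[OF ab(1) fS fS] ab by auto
  qed
  finally show ?thesis .
qed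

lemma edge_decomp:
  assumes S: "S \<subseteq> V"
  shows "int (card E) = (\<Sum>e\<in>E. int (card (e \<inter> S))) - (\<Sum>e\<in>E. of_bool (e \<subseteq> S))
            + int (card {e \<in> E. e \<inter> S = {}})"
proof -
  have pt: "(1::int) = int (card (e \<inter> S)) - of_bool (e \<subseteq> S) + of_bool (e \<inter> S = {})" if e: "e \<in> E" for e
  proof -
    obtain a b where ab: "a \<noteq> b" "e = {a, b}" using edgeE[OF e] by blast
    show ?thesis using ab by (cases "a \<in> S"; cases "b \<in> S") auto
  qed
  have "int (card E) = (\<Sum>e\<in>E. (1::int))" by simp
  also have "\<dots> = (\<Sum>e\<in>E. int (card (e \<inter> S)) - of_bool (e \<subseteq> S) + of_bool (e \<inter> S = {}))"
    using pt by (intro sum.cong) auto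
  also have "\<dots> = (\<Sum>e\<in>E. int (card (e \<inter> S))) - (\<Sum>e\<in>E. of_bool (e \<subseteq> S))
            + (\<Sum>e\<in>E. of_bool (e \<inter> S = {}))"
    by (simp add: sum.distrib sum_subtractf)
  also have "(\<Sum>e\<in>E. (of_bool (e \<inter> S = {}) :: int)) = int (card {e \<in> E. e \<inter> S = {}})"
  proof -
    have "E \<inter> {e. e \<inter> S = {}} = {e \<in> E. e \<inter> S = {}}" by blast
    then show ?thesis using finE by simp
  qed
  finally show ?thesis .
qed

lemma Kcount:
  assumes S: "S \<subseteq> V" and noK: "\<not> contains_Kbip V E l t" and t: "1 \<le> t"
  shows "(\<Sum>v\<in>V. card (nbr E v \<inter> S) choose l) \<le> (t - 1) * (card S choose l)"
proof -
  have fS: "finite S" using S finV finite_subset by blast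
  define P where "P = {A. A \<subseteq> S \<and> card A = l}"
  have finP: "finite P" unfolding P_def using fS by simp
  have cP: "card P = card S choose l" unfolding P_def using n_subsets[OF fS] by simp
  have 1: "(card (nbr E v \<inter> S) choose l) = (\<Sum>A\<in>P. (of_bool (A \<subseteq> nbr E v) :: nat))" for v
  proof -
    have "P \<inter> {A. A \<subseteq> nbr E v} = {A. A \<subseteq> nbr E v \<inter> S \<and> card A = l}" unfolding P_def by blast
    moreover have "finite (nbr E v \<inter> S)" using fS by simp
    ultimately show ?thesis using finP n_subsets[of "nbr E v \<inter> S" l] by simp
  qed
  have 2: "(\<Sum>v\<in>V. (of_bool (A \<subseteq> nbr E v) :: nat)) \<le> t - 1" if A: "A \<in> P" for A
  proof (rule ccontr)
    assume "\<not> ?thesis"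
    moreover have "(\<Sum>v\<in>V. (of_bool (A \<subseteq> nbr E v) :: nat)) = card {v \<in> V. A \<subseteq> nbr E v}"
    proof -
      have "V \<inter> {v. A \<subseteq> nbr E v} = {v \<in> V. A \<subseteq> nbr E v}" by blast
      then show ?thesis using finV by simp
    qed
    ultimately have "t \<le> card {v \<in> V. A \<subseteq> nbr E v}" by simp
    then obtain B where B: "B \<subseteq> {v \<in> V. A \<subseteq> nbr E v}" "card B = t"
      using obtain_subset_with_card_n by metis
    have AV: "A \<subseteq> V" using A S unfolding P_def by blast
    have disj: "A \<inter> B = {}" using B(1) no_loop by blast
    have edges: "\<forall>a\<in>A. \<forall>b\<in>B. {a, b} \<in> E" using B(1) unfolding nbr_def by blast
    have "contains_Kbip V E l t" unfolding contains_Kbip_def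
      using AV B disj edges A unfolding P_def by blast
    then show False using noK by simp
  qed
  have "(\<Sum>v\<in>V. card (nbr E v \<inter> S) choose l) = (\<Sum>v\<in>V. \<Sum>A\<in>P. (of_bool (A \<subseteq> nbr E v) :: nat))"
    using 1 by simp
  also have "\<dots> = (\<Sum>A\<in>P. \<Sum>v\<in>V. (of_bool (A \<subseteq> nbr E v) :: nat))" by (rule sum.swap)
  also have "\<dots> \<le> (\<Sum>A\<in>P. t - 1)" using 2 by (intro sum_mono) auto
  also have "\<dots> = (t - 1) * (card S choose l)" using cP by simp
  finally show ?thesis .
qed

end

lemma binom_lin: "1 \<le> l \<Longrightarrow> int d - int l + 1 \<le> int (d choose l)"
proof (cases "l - 1 \<le> d")
  case True
  assume l: "1 \<le> l"
  have "((l - 1) choose l) + (d - (l - 1)) * ((l - 1) choose (l - 1)) \<le> d choose l"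
    using binom_growth[OF True l] .
  then show ?thesis using l True by simp
next
  case False then show ?thesis by simp
qed

lemma ceil_half: "q - q div 2 \<le> q" for q :: nat by simp

context sgraph begin

lemma upper:
  assumes l3: "3 \<le> l" and lt: "l \<le> t" and s: "500 * (l + 1) \<le> s"
    and noK: "\<not> contains_Kbip V E l t" and noM: "\<not> contains_matching E (s + 1)"
  shows "int (card E) \<le> (int l - 1) * int (card V) + (int t - 1) * int (s choose l)
            - (int (s * (l - 1)) - int (s * (l - 1) div 2))"
proof -
  define D where "D = 2 * s + 3"
  define S where "S = {v \<in> V. D \<le> card (nbr E v)}"
  have SV: "S \<subseteq> V" unfolding S_def by blast
  have fS: "finite S" using SV finV finite_subset by blast
  have degS: "\<forall>x\<in>S. D \<le> card (nbr E x)" unfolding S_def by blast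
  have noM': "card M \<le> s" if "is_match E M" for M
    using match_ge[OF that, of "s + 1"] noM by linarith
  have m0: "is_match E {}" unfolding is_match_def by simp
  have cardS: "card S \<le> s"
  proof (rule ccontr)
    assume "\<not> ?thesis"
    then obtain S' where S': "S' \<subseteq> S" "card S' = s + 1"
      using obtain_subset_with_card_n[of "s + 1" S] by force
    have fS': "finite S'" using S' fS finite_subset by blast
    obtain M' where "is_match E M'" "card M' = card {} + card S'"
      using greedy[OF fS', of D "{}"] degS S' m0 unfolding D_def by auto
    then show False using noM' S' by fastforce
  qed
  define H where "H = {e \<in> E. e \<inter> S = {}}"
  have HE: "H \<subseteq> E" unfolding H_def by blast
  have nuH: "\<forall>M. is_match H M \<longrightarrow> card M \<le> s - card S"
  proof (intro allI impI, rule ccontr)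
    fix M assume M: "is_match H M" and c: "\<not> card M \<le> s - card S"
    then obtain M0 where M0: "M0 \<subseteq> M" "card M0 = s - card S + 1"
      using obtain_subset_with_card_n[of "s - card S + 1" M] by force
    have mE: "is_match E M0"
    proof -
      have "finite M0" using M M0(1) unfolding is_match_def using finite_subset by blast
      moreover have "M0 \<subseteq> E" using M M0(1) HE unfolding is_match_def by blast
      moreover have "\<forall>e\<in>M0. \<forall>f\<in>M0. e \<noteq> f \<longrightarrow> e \<inter> f = {}" using M M0(1) unfolding is_match_def by blast
      ultimately show ?thesis unfolding is_match_def by blast
    qed
    have dis: "\<Union>M0 \<inter> S = {}" using M M0(1) unfolding is_match_def H_def by blast
    have cc: "2 * card M0 + 2 * card S \<le> D" using M0 cardS unfolding D_def by linarith
    obtain M' where "is_match E M'" "card M' = card M0 + card S"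
      using greedy[OF fS degS mE dis cc] by blast
    then show False using noM' M0 cardS by fastforce
  qed
  have degH: "\<forall>v. card {e \<in> H. v \<in> e} \<le> 2 * s + 2"
  proof
    fix v
    show "card {e \<in> H. v \<in> e} \<le> 2 * s + 2"
    proof (cases "v \<in> V - S")
      case True
      have "card {e \<in> H. v \<in> e} \<le> card {e \<in> E. v \<in> e}"
        using finE HE by (intro card_mono) auto
      also have "\<dots> = card (nbr E v)" by (rule deg_inc)
      also have "\<dots> < D" using True unfolding S_def by auto
      finally show ?thesis unfolding D_def by simp
    next
      case False
      have "{e \<in> H. v \<in> e} = {}" using False edge_sub unfolding H_def by blast
      then show ?thesis by (metis card.empty zero_le)
    qed
  qed
  have cH: "card H \<le> 2 * (s - card S) * (2 * s + 2)"
    by (rule cover_bound[OF HE nuH degH])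
  define d where "d v = card (nbr E v \<inter> S)" for v
  have K: "(\<Sum>v\<in>V. d v choose l) \<le> (t - 1) * (card S choose l)"
    unfolding d_def using Kcount[OF SV noK] lt l3 by simp
  have all: "(\<Sum>v\<in>V. d v) = (\<Sum>e\<in>E. card (e \<inter> S))" unfolding d_def by (rule sum_deg_all[OF SV])
  have ins: "(\<Sum>v\<in>S. d v) = (\<Sum>e\<in>E. 2 * (of_bool (e \<subseteq> S) :: nat))" unfolding d_def by (rule sum_deg_in[OF SV])
  have dec: "int (card E) = (\<Sum>e\<in>E. int (card (e \<inter> S))) - (\<Sum>e\<in>E. of_bool (e \<subseteq> S)) + int (card H)"
    unfolding H_def by (rule edge_decomp[OF SV])
  have allI: "(\<Sum>v\<in>V. int (d v)) = (\<Sum>e\<in>E. int (card (e \<inter> S)))"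
    using all by (metis of_nat_sum)
  have insI: "(\<Sum>v\<in>S. int (d v)) = 2 * (\<Sum>e\<in>E. (of_bool (e \<subseteq> S) :: int))"
  proof -
    have "(\<Sum>v\<in>S. int (d v)) = int (\<Sum>e\<in>E. 2 * (of_bool (e \<subseteq> S) :: nat))" using ins by (metis of_nat_sum)
    also have "\<dots> = (\<Sum>e\<in>E. 2 * (of_bool (e \<subseteq> S) :: int))" by (simp add: of_nat_sum)
    finally show ?thesis by (simp add: sum_distrib_left)
  qed
  have split: "(\<Sum>v\<in>V. int (d v)) = (\<Sum>v\<in>S. int (d v)) + (\<Sum>v\<in>V - S. int (d v))"
    using sum.subset_diff[OF SV finV] by (simp add: add.commute)
  have twoE: "2 * int (card E) = 2 * (\<Sum>v\<in>V - S. int (d v)) + (\<Sum>v\<in>S. int (d v)) + 2 * int (card H)"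
    using dec allI insI split by linarith
  have pv: "int (d v) \<le> int (d v choose l) + int l - 1" for v
    using binom_lin[of l "d v"] l3 by simp
  have pv2: "int (d v) \<le> 2 * int (d v choose l) + int l - 1" for v
    using binom_lin[of l "d v"] l3 by simp
  have b1: "2 * (\<Sum>v\<in>V - S. int (d v)) \<le> 2 * (\<Sum>v\<in>V - S. int (d v choose l)) + 2 * ((int l - 1) * int (card (V - S)))"
  proof -
    have "(\<Sum>v\<in>V - S. int (d v)) \<le> (\<Sum>v\<in>V - S. int (d v choose l) + (int l - 1))"
      using pv by (intro sum_mono) (simp add: algebra_simps)
    also have "\<dots> = (\<Sum>v\<in>V - S. int (d v choose l)) + (int l - 1) * int (card (V - S))"
      by (simp add: sum.distrib)
    finally show ?thesis by linarith
  qed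
  have b2: "(\<Sum>v\<in>S. int (d v)) \<le> 2 * (\<Sum>v\<in>S. int (d v choose l)) + (int l - 1) * int (card S)"
  proof -
    have "(\<Sum>v\<in>S. int (d v)) \<le> (\<Sum>v\<in>S. 2 * int (d v choose l) + (int l - 1))"
      using pv2 by (intro sum_mono) (simp add: algebra_simps)
    also have "\<dots> = 2 * (\<Sum>v\<in>S. int (d v choose l)) + (int l - 1) * int (card S)"
      by (simp add: sum.distrib sum_distrib_left)
    finally show ?thesis .
  qed
  have splitC: "(\<Sum>v\<in>V. int (d v choose l)) = (\<Sum>v\<in>S. int (d v choose l)) + (\<Sum>v\<in>V - S. int (d v choose l))"
    using sum.subset_diff[OF SV finV] by (simp add: add.commute)
  have KI: "(\<Sum>v\<in>V. int (d v choose l)) \<le> (int t - 1) * int (card S choose l)"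
  proof -
    have "(\<Sum>v\<in>V. int (d v choose l)) = int (\<Sum>v\<in>V. d v choose l)" by (simp add: of_nat_sum)
    also have "\<dots> \<le> int ((t - 1) * (card S choose l))" using K by linarith
    also have "\<dots> = (int t - 1) * int (card S choose l)" using lt l3 by (simp add: of_nat_diff)
    finally show ?thesis .
  qed
  have cVS: "int (card (V - S)) = int (card V) - int (card S)"
    using card_Diff_subset[OF fS SV] card_mono[OF finV SV] by simp
  define m where "m = card S"
  have main: "2 * int (card E) \<le> 2 * ((int t - 1) * int (m choose l)) + 2 * ((int l - 1) * int (card V))
                - (int l - 1) * int m + 2 * int (card H)"
  proof -
    have "2 * int (card E) \<le> 2 * (\<Sum>v\<in>V. int (d v choose l)) + 2 * ((int l - 1) * int (card (V - S)))
        + (int l - 1) * int (card S) + 2 * int (card H)"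
      using twoE b1 b2 splitC by linarith
    moreover have "(int l - 1) * int (card (V - S)) = (int l - 1) * int (card V) - (int l - 1) * int (card S)"
      unfolding cVS by (simp add: algebra_simps)
    ultimately show ?thesis using KI unfolding m_def by linarith
  qed
  define q where "q = s * (l - 1)"
  have qI: "int q = int s * (int l - 1)" unfolding q_def using l3 by (simp add: of_nat_diff)
  show ?thesis
  proof (cases "m = s")
    case True
    have "H = {}" using nuH True m_def
    proof -
      have "card H = 0" using cH True m_def by simp
      then show ?thesis using HE finE finite_subset by (metis card_0_eq)
    qed
    then have "2 * int (card E) \<le> 2 * ((int t - 1) * int (s choose l)) + 2 * ((int l - 1) * int (card V)) - int q"
      using main True qI by (simp add: algebra_simps)
    then show ?thesis unfolding q_def[symmetric] by linarith
  next
    case False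
    then have ms: "m < s" using cardS m_def by simp
    define K where "K = s - m"
    have K1: "1 \<le> K" using ms K_def by simp
    have G: "(m choose l) + K * (4 * s + 4 + l * s) \<le> s choose l"
      using binom_gap[OF l3 s ms] K_def by simp
    have GI: "int (m choose l) + int K * (4 * int s + 4 + int l * int s) \<le> int (s choose l)"
      using of_nat_mono[OF G, where 'a=int] by simp
    have t1: "1 \<le> int t - 1" using lt l3 by simp
    have GT: "(int t - 1) * int (m choose l) + (int t - 1) * (int K * (4 * int s + 4 + int l * int s))
              \<le> (int t - 1) * int (s choose l)"
    proof -
      have "(int t - 1) * (int (m choose l) + int K * (4 * int s + 4 + int l * int s)) \<le> (int t - 1) * int (s choose l)"
        by (rule mult_left_mono[OF GI]) (use t1 in simp)
      then show ?thesis by (simp only: distrib_left)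
    qed
    have pos: "0 \<le> int K * (4 * int s + 4 + int l * int s)" by simp
    have GT2: "int K * (4 * int s + 4 + int l * int s) \<le> (int t - 1) * (int K * (4 * int s + 4 + int l * int s))"
      using mult_right_mono[OF t1 pos] by simp
    have cHK: "card H \<le> 2 * K * (2 * s + 2)" using cH unfolding K_def m_def .
    have cHI: "int (card H) \<le> 2 * int K * (2 * int s + 2)"
      using of_nat_mono[OF cHK, where 'a=int] by (simp add: algebra_simps)
    have qK: "int q \<le> int K * (int l * int s)"
    proof -
      have "int q \<le> int l * int s" using qI by (simp add: algebra_simps)
      also have "\<dots> = 1 * (int l * int s)" by simp
      also have "\<dots> \<le> int K * (int l * int s)" by (rule mult_right_mono) (use K1 in auto)
      finally show ?thesis .
    qed
    have lm: "0 \<le> (int l - 1) * int m" using l3 by simp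
    have "int (card E) \<le> (int t - 1) * int (m choose l) + (int l - 1) * int (card V) + int (card H)"
      using main lm by linarith
    then have "int (card E) \<le> (int l - 1) * int (card V) + (int t - 1) * int (s choose l) - int q"
      using GT GT2 cHI qK by (simp add: algebra_simps)
    then show ?thesis unfolding q_def[symmetric] by linarith
  qed
qed

end

definition wrap :: "nat \<Rightarrow> nat \<Rightarrow> nat \<Rightarrow> nat" where
  "wrap s i j = (if i + j < s then i + j else i + j - s)"

definition circ :: "nat \<Rightarrow> nat \<Rightarrow> nat set set" where
  "circ s r = (\<lambda>p. {fst p, wrap s (fst p) (snd p)}) ` ({0..<s} \<times> {1..r})"

definition mat :: "nat \<Rightarrow> nat set set" where
  "mat s = (\<lambda>i. {i, i + s div 2}) ` {0..<s div 2}"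

definition Ein :: "nat \<Rightarrow> nat \<Rightarrow> nat set set" where
  "Ein s l = circ s ((l - 1) div 2) \<union> (if even l then mat s else {})"

lemma circ_inj:
  assumes "2 * r < s"
  shows "inj_on (\<lambda>p. {fst p, wrap s (fst p) (snd p)}) ({0..<s} \<times> {1..r})"
proof (rule inj_onI)
  fix p p' assume p: "p \<in> {0..<s} \<times> {1..r}" and p': "p' \<in> {0..<s} \<times> {1..r}"
    and eq: "{fst p, wrap s (fst p) (snd p)} = {fst p', wrap s (fst p') (snd p')}"
  obtain i j i' j' where ij: "p = (i, j)" "p' = (i', j')" by (cases p, cases p')
  have r: "i < s" "1 \<le> j" "j \<le> r" "i' < s" "1 \<le> j'" "j' \<le> r" using p p' ij by auto
  from eq have "(i = i' \<and> wrap s i j = wrap s i' j') \<or> (i = wrap s i' j' \<and> wrap s i j = i')"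
    using ij by (auto simp: doubleton_eq_iff)
  then show "p = p'"
    using r assms ij unfolding wrap_def by (auto split: if_splits)
qed

lemma mat_inj: fixes s :: nat shows "inj_on (\<lambda>i. {i, i + s div 2}) {0..<s div 2}"
  by (rule inj_onI) (auto simp: doubleton_eq_iff)

lemma circ_mat_disj:
  assumes "r < s div 2"
  shows "circ s r \<inter> mat s = {}"
proof -
  have False if "{i, wrap s i j} = {a, a + s div 2}" "i < s" "1 \<le> j" "j \<le> r" "a < s div 2" for i j a
  proof -
    from that(1) have "(i = a \<and> wrap s i j = a + s div 2) \<or> (i = a + s div 2 \<and> wrap s i j = a)"
      by (auto simp: doubleton_eq_iff)
    then show False using that assms unfolding wrap_def by (auto split: if_splits)
  qed
  then show ?thesis unfolding circ_def mat_def by fastforce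
qed

lemma Ein_edge:
  assumes "e \<in> Ein s l" and "2 * l < s" and "1 \<le> l"
  shows "e \<subseteq> {0..<s} \<and> card e = 2"
proof -
  have r: "(l - 1) div 2 < s" using assms by simp
  show ?thesis
  proof (cases "e \<in> circ s ((l - 1) div 2)")
    case True
    then obtain i j where ij: "e = {i, wrap s i j}" "i < s" "1 \<le> j" "j \<le> (l - 1) div 2"
      unfolding circ_def by auto
    have "i \<noteq> wrap s i j" "wrap s i j < s" using ij r unfolding wrap_def by auto
    then show ?thesis using ij by auto
  next
    case False
    then have "e \<in> mat s" using assms(1) unfolding Ein_def by (auto split: if_splits)
    then obtain i where "e = {i, i + s div 2}" "i < s div 2" unfolding mat_def by auto
    moreover have "0 < s div 2" using assms by simp
    ultimately show ?thesis by auto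
  qed
qed

lemma Ein_card:
  assumes "4 * l < s" and "1 \<le> l"
  shows "card (Ein s l) = s * (l - 1) div 2"
proof -
  define r where "r = (l - 1) div 2"
  have r1: "2 * r < s" "r < s div 2" using assms unfolding r_def by auto
  have cc: "card (circ s r) = s * r"
    unfolding circ_def using card_image[OF circ_inj[OF r1(1)]] by simp
  have cm: "card (mat s) = s div 2"
    unfolding mat_def using card_image[OF mat_inj] by simp
  have fc: "finite (circ s r)" unfolding circ_def by simp
  have fm: "finite (mat s)" unfolding mat_def by simp
  show ?thesis
  proof (cases "even l")
    case True
    then have l1: "l - 1 = 2 * r + 1" unfolding r_def using assms by presburger
    have "card (Ein s l) = card (circ s r) + card (mat s)"
      unfolding Ein_def r_def[symmetric] using True card_Un_disjoint[OF fc fm circ_mat_disj[OF r1(2)]] by simp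
    also have "\<dots> = s * (l - 1) div 2" using cc cm l1 by simp
    finally show ?thesis .
  next
    case False
    then have l1: "l - 1 = 2 * r" unfolding r_def using assms by presburger
    show ?thesis unfolding Ein_def r_def[symmetric] using False cc l1 by simp
  qed
qed

lemma Ein_deg:
  assumes "4 * l < s" and "1 \<le> l"
  shows "card {u. {u, v} \<in> Ein s l} \<le> l - 1"
proof -
  define r where "r = (l - 1) div 2"
  define A1 where "A1 = (\<lambda>j. wrap s v j) ` {1..r}"
  define A2 where "A2 = (\<lambda>j. if j \<le> v then v - j else v + s - j) ` {1..r}"
  define A3 where "A3 = (if even l then {if v < s div 2 then v + s div 2 else v - s div 2} else {})"
  have sub: "{u. {u, v} \<in> Ein s l} \<subseteq> A1 \<union> A2 \<union> A3"
  proof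
    fix u assume u: "u \<in> {u. {u, v} \<in> Ein s l}"
    show "u \<in> A1 \<union> A2 \<union> A3"
    proof (cases "{u, v} \<in> circ s r")
      case True
      then obtain i j where ij: "{u, v} = {i, wrap s i j}" "i < s" "1 \<le> j" "j \<le> r"
        unfolding circ_def by auto
      then have "(u = i \<and> v = wrap s i j) \<or> (u = wrap s i j \<and> v = i)" by (auto simp: doubleton_eq_iff)
      then show ?thesis
      proof
        assume a: "u = i \<and> v = wrap s i j"
        have "u = (if j \<le> v then v - j else v + s - j)" using a ij unfolding wrap_def by (auto split: if_splits)
        then have "u \<in> A2" unfolding A2_def using ij by auto
        then show ?thesis by blast
      next
        assume a: "u = wrap s i j \<and> v = i"
        then have "u \<in> A1" unfolding A1_def using ij by auto
        then show ?thesis by blast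
      qed
    next
      case False
      then have ev: "even l" and m: "{u, v} \<in> mat s" using u unfolding Ein_def r_def by (auto split: if_splits)
      from m obtain a where a0: "a \<in> {0..<s div 2}" "{u, v} = {a, a + s div 2}" unfolding mat_def by (rule imageE)
      then have a: "{u, v} = {a, a + s div 2}" "a < s div 2" by auto
      then have "u = (if v < s div 2 then v + s div 2 else v - s div 2)"
        by (auto simp: doubleton_eq_iff split: if_splits)
      then show ?thesis unfolding A3_def using ev by auto
    qed
  qed
  have c1: "card A1 \<le> r" unfolding A1_def using card_image_le[of "{1..r}"] by (metis card_atLeastAtMost diff_Suc_1 finite_atLeastAtMost)
  have c2: "card A2 \<le> r" unfolding A2_def using card_image_le[of "{1..r}"] by (metis card_atLeastAtMost diff_Suc_1 finite_atLeastAtMost)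
  have c3: "card A3 \<le> (if even l then 1 else 0)" unfolding A3_def by auto
  have fin: "finite A1" "finite A2" "finite A3" unfolding A1_def A2_def A3_def by auto
  have "card {u. {u, v} \<in> Ein s l} \<le> card (A1 \<union> A2 \<union> A3)"
    using sub fin by (intro card_mono) auto
  also have "\<dots> \<le> card A1 + card A2 + card A3"
    by (meson card_Un_le add_le_mono le_trans order_refl)
  also have "\<dots> \<le> l - 1" using c1 c2 c3 assms unfolding r_def by (auto split: if_splits; presburger)
  finally show ?thesis .
qed

locale constr =
  fixes l t s n :: nat and f :: "nat \<Rightarrow> nat set \<times> nat"
  assumes l3: "3 \<le> l" and lt: "l \<le> t" and sl: "4 * l < s"
    and nN: "s + (t - 1) * (s choose l) + 1 \<le> n"
    and bij: "bij_betw f {s..<s + (t - 1) * (s choose l)} ({A. A \<subseteq> {0..<s} \<and> card A = l} \<times> {0..<t - 1})"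
begin

abbreviation "N \<equiv> (t - 1) * (s choose l)"

definition nb :: "nat \<Rightarrow> nat set" where
  "nb v = (if v < s + N then fst (f v) else {0..<l - 1})"

definition Eout :: "nat set set" where
  "Eout = {{a, v} | a v. v \<in> {s..<n} \<and> a \<in> nb v}"

definition EE :: "nat set set" where
  "EE = Ein s l \<union> Eout"

lemma nb_props:
  assumes "s \<le> v"
  shows "nb v \<subseteq> {0..<s} \<and> card (nb v) = (if v < s + N then l else l - 1)"
proof (cases "v < s + N")
  case True
  then have "f v \<in> {A. A \<subseteq> {0..<s} \<and> card A = l} \<times> {0..<t - 1}"
    using bij assms by (auto dest: bij_betw_apply)
  then show ?thesis using True unfolding nb_def by (auto simp: mem_Times_iff)
next
  case False
  then show ?thesis using sl unfolding nb_def by auto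
qed

lemma fin_nb: "s \<le> v \<Longrightarrow> finite (nb v)"
  using nb_props finite_subset by blast

lemma Ein_sub: "e \<in> Ein s l \<Longrightarrow> e \<subseteq> {0..<s} \<and> card e = 2"
  using Ein_edge[of e s l] sl l3 by simp

lemma simple: "simple_graph {0..<n} EE"
  unfolding simple_graph_def
proof
  fix e assume e: "e \<in> EE"
  show "e \<subseteq> {0..<n} \<and> card e = 2"
  proof (cases "e \<in> Ein s l")
    case True
    then show ?thesis using Ein_sub nN by fastforce
  next
    case False
    then obtain a v where av: "e = {a, v}" "v \<in> {s..<n}" "a \<in> nb v" using e unfolding EE_def Eout_def by blast
    have "a < s" using nb_props[of v] av(2,3) by auto
    then show ?thesis using av by auto
  qed
qed

lemma nbr_out:
  assumes "s \<le> v"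
  shows "nbr EE v \<subseteq> nb v"
proof
  fix u assume "u \<in> nbr EE v"
  then have u: "{u, v} \<in> EE" unfolding nbr_def by simp
  show "u \<in> nb v"
  proof (cases "{u, v} \<in> Ein s l")
    case True
    then show ?thesis using Ein_sub assms by fastforce
  next
    case False
    then obtain a v' where av: "{u, v} = {a, v'}" "v' \<in> {s..<n}" "a \<in> nb v'"
      using u unfolding EE_def Eout_def by blast
    have "a < s" using nb_props[of v'] av(2,3) by auto
    then have "v = v' \<and> u = a" using av assms by (auto simp: doubleton_eq_iff)
    then show ?thesis using av by simp
  qed
qed

lemma nbr_in:
  assumes "v < s"
  shows "nbr EE v \<inter> {0..<s} \<subseteq> {u. {u, v} \<in> Ein s l}"
proof
  fix u assume "u \<in> nbr EE v \<inter> {0..<s}"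
  then have u: "{u, v} \<in> EE" "u < s" unfolding nbr_def by auto
  show "u \<in> {u. {u, v} \<in> Ein s l}"
  proof (rule ccontr)
    assume "u \<notin> {u. {u, v} \<in> Ein s l}"
    then obtain a v' where av: "{u, v} = {a, v'}" "v' \<in> {s..<n}"
      using u unfolding EE_def Eout_def by blast
    then show False using u assms by (auto simp: doubleton_eq_iff)
  qed
qed

lemma CN:
  assumes X: "X \<subseteq> {0..<s}" "card X = l" and Xv: "X \<subseteq> nbr EE v"
  shows "s \<le> v \<and> v < s + N \<and> fst (f v) = X"
proof (cases "v < s")
  case True
  have "X \<subseteq> {u. {u, v} \<in> Ein s l}" using nbr_in[OF True] X Xv by blast
  moreover have "finite {u. {u, v} \<in> Ein s l}"
  proof -
    have "{u. {u, v} \<in> Ein s l} \<subseteq> {0..<s}" using Ein_sub by blast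
    then show ?thesis using finite_subset by blast
  qed
  ultimately have "card X \<le> card {u. {u, v} \<in> Ein s l}" by (rule card_mono[rotated])
  also have "\<dots> \<le> l - 1" using Ein_deg[of l s v] sl l3 by simp
  finally show ?thesis using X l3 by simp
next
  case False
  then have sv: "s \<le> v" by simp
  have Xn: "X \<subseteq> nb v" using nbr_out[OF sv] Xv by blast
  have np: "nb v \<subseteq> {0..<s}" "card (nb v) = (if v < s + N then l else l - 1)" using nb_props[OF sv] by auto
  have "card X \<le> card (nb v)" using Xn fin_nb[OF sv] by (rule card_mono[rotated])
  then have vN: "v < s + N" using np X l3 by (auto split: if_splits)
  then have "X = nb v" using card_subset_eq[OF fin_nb[OF sv] Xn] np X by simp
  then show ?thesis using sv vN unfolding nb_def by simp
qed

lemma cn_card: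
  assumes X: "X \<subseteq> {0..<s}" "card X = l"
  shows "card {v \<in> {0..<n}. X \<subseteq> nbr EE v} \<le> t - 1"
proof -
  define Z where "Z = {v \<in> {s..<s + N}. fst (f v) = X}"
  have sub: "{v \<in> {0..<n}. X \<subseteq> nbr EE v} \<subseteq> Z" unfolding Z_def using CN[OF X] by auto
  have inj: "inj_on f Z" using bij unfolding Z_def bij_betw_def by (auto intro: inj_on_subset)
  have img: "f ` Z \<subseteq> {X} \<times> {0..<t - 1}"
  proof
    fix y assume "y \<in> f ` Z"
    then obtain v where v: "v \<in> Z" "y = f v" by blast
    then have "f v \<in> {A. A \<subseteq> {0..<s} \<and> card A = l} \<times> {0..<t - 1}"
      using bij unfolding Z_def by (auto dest: bij_betw_apply)
    then show "y \<in> {X} \<times> {0..<t - 1}" using v unfolding Z_def by (auto simp: mem_Times_iff)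
  qed
  have "card Z = card (f ` Z)" using card_image[OF inj] by simp
  also have "\<dots> \<le> card ({X} \<times> {0..<t - 1})" using img by (intro card_mono) auto
  also have "\<dots> = t - 1" by simp
  finally have "card Z \<le> t - 1" .
  moreover have "finite Z" unfolding Z_def by simp
  ultimately show ?thesis using sub card_mono le_trans by blast
qed

lemma noK: "\<not> contains_Kbip {0..<n} EE l t"
proof
  assume "contains_Kbip {0..<n} EE l t"
  then obtain A B where AB: "A \<subseteq> {0..<n}" "B \<subseteq> {0..<n}" "A \<inter> B = {}" "card A = l" "card B = t"
    "\<forall>a\<in>A. \<forall>b\<in>B. {a, b} \<in> EE" unfolding contains_Kbip_def by blast
  have sym: "{a, b} \<in> EE \<Longrightarrow> {b, a} \<in> EE" for a b by (simp add: insert_commute)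
  show False
  proof (cases "A \<subseteq> {0..<s}")
    case True
    have "B \<subseteq> {v \<in> {0..<n}. A \<subseteq> nbr EE v}" using AB unfolding nbr_def by blast
    then have "card B \<le> card {v \<in> {0..<n}. A \<subseteq> nbr EE v}" by (intro card_mono) auto
    also have "\<dots> \<le> t - 1" by (rule cn_card[OF True AB(4)])
    finally show False using AB lt l3 by simp
  next
    case False
    then obtain a where a0: "a \<in> A" "a \<notin> {0..<s}" by blast
    then have a: "a \<in> A" "s \<le> a" by auto
    have "B \<subseteq> nbr EE a" using AB a sym unfolding nbr_def by blast
    then have Bn: "B \<subseteq> nb a" using nbr_out[OF a(2)] by blast
    have np: "nb a \<subseteq> {0..<s}" "card (nb a) \<le> l" using nb_props[OF a(2)] by auto
    have "t \<le> l" using card_mono[OF fin_nb[OF a(2)] Bn] np AB by simp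
    then have tl: "t = l" using lt by simp
    have BS: "B \<subseteq> {0..<s}" using Bn np by blast
    have "A \<subseteq> {v \<in> {0..<n}. B \<subseteq> nbr EE v}" using AB sym unfolding nbr_def by blast
    then have "card A \<le> card {v \<in> {0..<n}. B \<subseteq> nbr EE v}" by (intro card_mono) auto
    also have "\<dots> \<le> t - 1" by (rule cn_card[OF BS]) (use AB tl in simp)
    finally show False using AB tl l3 by simp
  qed
qed

lemma edge_meets: "e \<in> EE \<Longrightarrow> e \<inter> {0..<s} \<noteq> {}"
proof -
  assume e: "e \<in> EE"
  show ?thesis
  proof (cases "e \<in> Ein s l")
    case True
    then have "e \<subseteq> {0..<s}" "card e = 2" using Ein_sub by auto
    then have "e \<inter> {0..<s} = e" "e \<noteq> {}" by auto
    then show ?thesis by simp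
  next
    case False
    then obtain a v where av: "e = {a, v}" "v \<in> {s..<n}" "a \<in> nb v" using e unfolding EE_def Eout_def by blast
    have "a < s" using nb_props[of v] av(2,3) by auto
    then show ?thesis using av by auto
  qed
qed

lemma noM: "\<not> contains_matching EE (s + 1)"
proof
  assume "contains_matching EE (s + 1)"
  then obtain M where M: "M \<subseteq> EE" "finite M" "card M = s + 1"
    "\<forall>e\<in>M. \<forall>f\<in>M. e \<noteq> f \<longrightarrow> e \<inter> f = {}" unfolding contains_matching_def by blast
  define g where "g e = (SOME x. x \<in> e \<inter> {0..<s})" for e
  have g: "g e \<in> e \<inter> {0..<s}" if "e \<in> M" for e
    using edge_meets[of e] M(1) that unfolding g_def by (metis some_in_eq subsetD)
  have "inj_on g M"
  proof (rule inj_onI)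
    fix x y assume xy: "x \<in> M" "y \<in> M" "g x = g y"
    show "x = y"
    proof (rule ccontr)
      assume ne: "x \<noteq> y"
      have "x \<inter> y = {}" using M(4) xy(1,2) ne by blast
      moreover have "g x \<in> x" using g[OF xy(1)] by (rule IntD1)
      moreover have "g x \<in> y" using g[OF xy(2)] xy(3) by (metis IntD1)
      ultimately show False by (metis IntI empty_iff)
    qed
  qed
  moreover have "g ` M \<subseteq> {0..<s}" using g by blast
  ultimately have "card M \<le> card {0..<s}" using card_inj_on_le by blast
  then show False using M by simp
qed

lemma card_EE: "card EE = s * (l - 1) div 2 + N * l + (n - s - N) * (l - 1)"
proof -
  define Sg where "Sg = Sigma {s..<n} nb"
  have finSg: "finite Sg" unfolding Sg_def using fin_nb by (intro finite_SigmaI) auto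
  have inj: "inj_on (\<lambda>p. {snd p, fst p}) Sg"
  proof (rule inj_onI)
    fix p q assume p: "p \<in> Sg" and q: "q \<in> Sg" and eq: "{snd p, fst p} = {snd q, fst q}"
    have "snd p < s" "s \<le> fst p" "snd q < s" "s \<le> fst q" using p q nb_props unfolding Sg_def by fastforce+
    then show "p = q" using eq by (auto simp: doubleton_eq_iff prod_eq_iff)
  qed
  have img: "(\<lambda>p. {snd p, fst p}) ` Sg = Eout"
  proof
    show "(\<lambda>p. {snd p, fst p}) ` Sg \<subseteq> Eout" unfolding Sg_def Eout_def by force
    show "Eout \<subseteq> (\<lambda>p. {snd p, fst p}) ` Sg"
    proof
      fix e assume "e \<in> Eout"
      then obtain a v where av: "e = {a, v}" "v \<in> {s..<n}" "a \<in> nb v" unfolding Eout_def by blast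
      then have "(v, a) \<in> Sg" unfolding Sg_def by simp
      then show "e \<in> (\<lambda>p. {snd p, fst p}) ` Sg" using av(1) by (intro image_eqI[of _ _ "(v, a)"]) auto
    qed
  qed
  have cSg: "card Sg = (\<Sum>v\<in>{s..<n}. card (nb v))" unfolding Sg_def
    using fin_nb by (intro card_SigmaI) auto
  have split: "{s..<n} = {s..<s + N} \<union> {s + N..<n}" using nN by auto
  have "(\<Sum>v\<in>{s..<n}. card (nb v)) = (\<Sum>v\<in>{s..<s + N}. card (nb v)) + (\<Sum>v\<in>{s + N..<n}. card (nb v))"
    unfolding split by (rule sum.union_disjoint) auto
  also have "(\<Sum>v\<in>{s..<s + N}. card (nb v)) = (\<Sum>v\<in>{s..<s + N}. l)"
    using nb_props by (intro sum.cong) auto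
  also have "(\<Sum>v\<in>{s + N..<n}. card (nb v)) = (\<Sum>v\<in>{s + N..<n}. l - 1)"
    using nb_props by (intro sum.cong) auto
  finally have cs: "card Sg = N * l + (n - s - N) * (l - 1)" using cSg by simp
  have cout: "card Eout = N * l + (n - s - N) * (l - 1)"
    using card_image[OF inj] img cs by simp
  have disj: "Ein s l \<inter> Eout = {}"
  proof -
    have "e \<notin> Eout" if "e \<in> Ein s l" for e
    proof
      assume "e \<in> Eout"
      then obtain a v where "e = {a, v}" "v \<in> {s..<n}" unfolding Eout_def by blast
      then show False using Ein_sub[OF that] by auto
    qed
    then show ?thesis by blast
  qed
  have fin1: "finite (Ein s l)" unfolding Ein_def circ_def mat_def by simp
  have fin2: "finite Eout" unfolding img[symmetric] using finSg by (rule finite_imageI)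
  have "card EE = card (Ein s l) + card Eout" unfolding EE_def by (rule card_Un_disjoint[OF fin1 fin2 disj])
  then show ?thesis using Ein_card[of l s] sl l3 cout by simp
qed

end

lemma ceil_half_eq: "\<lceil>real q / 2\<rceil> = int q - int (q div 2)"
proof (cases "even q")
  case True
  then obtain a where a: "q = 2 * a" by blast
  then show ?thesis by simp
next
  case False
  then obtain a where a: "q = 2 * a + 1" using oddE by blast
  have "\<lceil>real q / 2\<rceil> = int a + 1"
    by (rule ceiling_unique) (auto simp: a)
  then show ?thesis using a by simp
qed

theorem theorem1p2:
  fixes l t :: nat
  assumes "3 \<le> l" and "l \<le> t"
  shows "\<exists>s0. \<forall>s\<ge>s0. \<forall>n. n \<ge> s + (t - 1) * (s choose l) + 1 \<longrightarrow>
           int (ex_Kbip_matching n l t s) =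
             (int l - 1) * int n + (int t - 1) * int (s choose l)
             - \<lceil>real (s * (l - 1)) / 2\<rceil>"
proof (intro exI[of _ "500 * (l + 1)"] allI impI)
  fix s n assume s: "500 * (l + 1) \<le> s" and n: "s + (t - 1) * (s choose l) + 1 \<le> n"
  have l3: "3 \<le> l" and lt: "l \<le> t" using assms by auto
  define N where "N = (t - 1) * (s choose l)"
  define P where "P = {A. A \<subseteq> {0..<s} \<and> card A = l}"
  have cP: "card (P \<times> {0..<t - 1}) = N"
    unfolding P_def N_def using n_subsets[of "{0..<s}" l] by (simp add: card_cartesian_product)
  have fP: "finite (P \<times> {0..<t - 1})" unfolding P_def by simp
  obtain f where f: "bij_betw f {s..<s + N} (P \<times> {0..<t - 1})"
    using finite_same_card_bij[of "{s..<s + N}" "P \<times> {0..<t - 1}"] cP fP by auto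
  have sl: "4 * l < s" using s by simp
  interpret c: constr l t s n f
    using l3 lt sl n f unfolding N_def P_def by unfold_locales auto
  define q where "q = s * (l - 1)"
  define T where "T = (int l - 1) * int n + (int t - 1) * int (s choose l) - (int q - int (q div 2))"
  define \<Omega> where "\<Omega> = {card E | E. simple_graph {0..<n} E \<and> \<not> contains_Kbip {0..<n} E l t \<and>
      \<not> contains_matching E (s + 1)}"
  have finO: "finite \<Omega>"
  proof -
    have "\<Omega> \<subseteq> card ` Pow (Pow {0..<n})" unfolding \<Omega>_def simple_graph_def by auto
    moreover have "finite (card ` Pow (Pow {0..<n}))" by simp
    ultimately show ?thesis using finite_subset by blast
  qed
  have xT: "int (card c.EE) = T"
  proof -
    have ce: "card c.EE = q div 2 + N * l + (n - s - N) * (l - 1)"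
      using c.card_EE unfolding q_def N_def by simp
    have i1: "int (n - s - N) = int n - int s - int N" using n unfolding N_def by simp
    have i2: "int (l - 1) = int l - 1" using l3 by simp
    have i3: "int N = (int t - 1) * int (s choose l)" unfolding N_def using lt l3 by (simp add: of_nat_diff)
    have i4: "int q = int s * (int l - 1)" unfolding q_def using l3 by (simp add: of_nat_diff)
    have "int (card c.EE) = int (q div 2) + int N * int l + int (n - s - N) * int (l - 1)"
      unfolding ce of_nat_add of_nat_mult by simp
    also have "\<dots> = int (q div 2) + int N * int l + (int n - int s - int N) * (int l - 1)"
      unfolding i1 i2 by simp
    also have "\<dots> = T" unfolding T_def i3 i4 by (simp add: algebra_simps)
    finally show ?thesis .
  qed
  have xO: "card c.EE \<in> \<Omega>" unfolding \<Omega>_def using c.simple c.noK c.noM by blast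
  have ub: "y \<le> card c.EE" if y: "y \<in> \<Omega>" for y
  proof -
    obtain E' where E': "y = card E'" "simple_graph {0..<n} E'" "\<not> contains_Kbip {0..<n} E' l t"
      "\<not> contains_matching E' (s + 1)" using y unfolding \<Omega>_def by blast
    interpret g: sgraph "{0..<n}" E' using E'(2) by unfold_locales auto
    have "int (card E') \<le> T"
      using g.upper[OF l3 lt s E'(3) E'(4)] unfolding T_def q_def by simp
    then show ?thesis using xT E'(1) by linarith
  qed
  have "ex_Kbip_matching n l t s = card c.EE"
    unfolding ex_Kbip_matching_def \<Omega>_def[symmetric] by (rule Max_eqI[OF finO ub xO])
  then show "int (ex_Kbip_matching n l t s) =
             (int l - 1) * int n + (int t - 1) * int (s choose l)
             - \<lceil>real (s * (l - 1)) / 2\<rceil>"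
    using xT unfolding T_def q_def ceil_half_eq by simp
qed

end
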